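(* Let $e_1,e_2,e_3\in\mathbb{C}$ be pairwise distinct and let $\mathfrak{h}$ be a Lie subalgebra of finite codimension in $\mathfrak{R}_{e_1,e_2,e_3}$. Then every solvable ideal of $\mathfrak{h}$ is zero.
   Context: Work over $\mathbb{C}$. Let $E_{e_1,e_2,e_3}=\mathbb{C}[v_1,v_2,v_3]/I$, where $I$ is the ideal generated by $v_i^2-v_j^2+e_i-e_j$, $i,j=1,2,3$, and let $\hat v_i$ be the image of $v_i$. Let $\alpha_1,\alpha_2,\alpha_3$ be a basis of $\mathfrak{so}_3(\mathbb{C})$ with $[\alpha_1,\alpha_2]=\alpha_3$, $[\alpha_2,\alpha_3]=\alpha_1$, $[\alpha_3,\alpha_1]=\alpha_2$. The Lie algebra $\mathfrak{so}_3(\mathbb{C})\otimes_{\mathbb{C}}E_{e_1,e_2,e_3}$ has bracket $[\alpha\otimes h_1,\beta\otimes h_2]=[\alpha,\beta]\otimes h_1h_2$, and $\mathfrak{R}_{e_1,e_2,e_3}$ is its Lie subalgebra generated by $\alpha_i\otimes\hat v_i$, $i=1,2,3$. *)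

theory Defs
  imports Complex_Main "HOL-Library.Poly_Mapping" "HOL-Library.Product_Plus"
begin

text \<open>Polynomials in three variables: finitely supported maps from exponent
  vectors (a,b,c) (meaning v1^a v2^b v3^c) to coefficients; multiplication is
  the convolution product of Poly_Mapping.\<close>

type_synonym cpoly = "(nat \<times> nat \<times> nat) \<Rightarrow>\<^sub>0 complex"

definition pconst :: "complex \<Rightarrow> cpoly" where
  "pconst c = Poly_Mapping.single (0,0,0) c"

definition pvar :: "nat \<Rightarrow> cpoly" where
  "pvar i = Poly_Mapping.single
     (if i = 1 then (1,0,0) else if i = 2 then (0,1,0) else (0,0,1)) 1"

definition evec :: "complex \<Rightarrow> complex \<Rightarrow> complex \<Rightarrow> nat \<Rightarrow> complex" where
  "evec e1 e2 e3 i = (if i = 1 then e1 else if i = 2 then e2 else e3)"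

definition relgen :: "complex \<Rightarrow> complex \<Rightarrow> complex \<Rightarrow> nat \<Rightarrow> nat \<Rightarrow> cpoly" where
  "relgen e1 e2 e3 i j =
     pvar i ^ 2 - pvar j ^ 2 + pconst (evec e1 e2 e3 i - evec e1 e2 e3 j)"

definition relI :: "complex \<Rightarrow> complex \<Rightarrow> complex \<Rightarrow> cpoly set" where
  "relI e1 e2 e3 =
     {(\<Sum>i\<in>{1,2,3}. \<Sum>j\<in>{1,2,3}. c i j * relgen e1 e2 e3 i j) | c. True}"

text \<open>An element x1 (alpha1\<otimes>h1) + x2 (alpha2\<otimes>h2) + x3 (alpha3\<otimes>h3) is the
  triple (h1,h2,h3); elements of E = C[v]/I are cosets p + I.\<close>

type_synonym ptriple = "cpoly \<times> cpoly \<times> cpoly"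
type_synonym ltriple = "cpoly set \<times> cpoly set \<times> cpoly set"

definition pcoset :: "cpoly set \<Rightarrow> cpoly \<Rightarrow> cpoly set" where
  "pcoset I p = {q. q - p \<in> I}"

definition cls :: "cpoly set \<Rightarrow> ptriple \<Rightarrow> ltriple" where
  "cls I x = (case x of (p1,p2,p3) \<Rightarrow> (pcoset I p1, pcoset I p2, pcoset I p3))"

definition Lcarrier :: "cpoly set \<Rightarrow> ltriple set" where
  "Lcarrier I = range (cls I)"

definition rep :: "cpoly set \<Rightarrow> ltriple \<Rightarrow> ptriple" where
  "rep I X = (SOME x. cls I x = X)"

definition pscale :: "complex \<Rightarrow> ptriple \<Rightarrow> ptriple" where
  "pscale c x = (case x of (p1,p2,p3) \<Rightarrow> (pconst c * p1, pconst c * p2, pconst c * p3))"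

text \<open>Bracket: [alpha1,alpha2]=alpha3, [alpha2,alpha3]=alpha1, [alpha3,alpha1]=alpha2,
  extended E-bilinearly.\<close>
definition pbr :: "ptriple \<Rightarrow> ptriple \<Rightarrow> ptriple" where
  "pbr x y = (case x of (a1,a2,a3) \<Rightarrow> case y of (b1,b2,b3) \<Rightarrow>
      (a2*b3 - a3*b2, a3*b1 - a1*b3, a1*b2 - a2*b1))"

definition Lzero :: "cpoly set \<Rightarrow> ltriple" where
  "Lzero I = cls I 0"

definition Ladd :: "cpoly set \<Rightarrow> ltriple \<Rightarrow> ltriple \<Rightarrow> ltriple" where
  "Ladd I X Y = cls I (rep I X + rep I Y)"

definition Lscale :: "cpoly set \<Rightarrow> complex \<Rightarrow> ltriple \<Rightarrow> ltriple" where
  "Lscale I c X = cls I (pscale c (rep I X))"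

definition Lbr :: "cpoly set \<Rightarrow> ltriple \<Rightarrow> ltriple \<Rightarrow> ltriple" where
  "Lbr I X Y = cls I (pbr (rep I X) (rep I Y))"

inductive_set Lspan :: "cpoly set \<Rightarrow> ltriple set \<Rightarrow> ltriple set"
  for I :: "cpoly set" and S :: "ltriple set" where
  span_zero: "Lzero I \<in> Lspan I S"
| span_base: "x \<in> S \<Longrightarrow> x \<in> Lspan I S"
| span_add: "x \<in> Lspan I S \<Longrightarrow> y \<in> Lspan I S \<Longrightarrow> Ladd I x y \<in> Lspan I S"
| span_scale: "x \<in> Lspan I S \<Longrightarrow> Lscale I c x \<in> Lspan I S"

definition is_subspace :: "cpoly set \<Rightarrow> ltriple set \<Rightarrow> bool" where
  "is_subspace I V \<longleftrightarrow> V \<subseteq> Lcarrier I \<and> Lzero I \<in> V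
     \<and> (\<forall>x\<in>V. \<forall>y\<in>V. Ladd I x y \<in> V) \<and> (\<forall>c. \<forall>x\<in>V. Lscale I c x \<in> V)"

definition is_lie_subalgebra :: "cpoly set \<Rightarrow> ltriple set \<Rightarrow> bool" where
  "is_lie_subalgebra I V \<longleftrightarrow> is_subspace I V \<and> (\<forall>x\<in>V. \<forall>y\<in>V. Lbr I x y \<in> V)"

inductive_set Lgen :: "cpoly set \<Rightarrow> ltriple set \<Rightarrow> ltriple set"
  for I :: "cpoly set" and S :: "ltriple set" where
  gen_zero: "Lzero I \<in> Lgen I S"
| gen_base: "x \<in> S \<Longrightarrow> x \<in> Lgen I S"
| gen_add: "x \<in> Lgen I S \<Longrightarrow> y \<in> Lgen I S \<Longrightarrow> Ladd I x y \<in> Lgen I S"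
| gen_scale: "x \<in> Lgen I S \<Longrightarrow> Lscale I c x \<in> Lgen I S"
| gen_br: "x \<in> Lgen I S \<Longrightarrow> y \<in> Lgen I S \<Longrightarrow> Lbr I x y \<in> Lgen I S"

definition Rgens :: "complex \<Rightarrow> complex \<Rightarrow> complex \<Rightarrow> ltriple set" where
  "Rgens e1 e2 e3 = cls (relI e1 e2 e3) ` {(pvar 1, 0, 0), (0, pvar 2, 0), (0, 0, pvar 3)}"

definition Ralg :: "complex \<Rightarrow> complex \<Rightarrow> complex \<Rightarrow> ltriple set" where
  "Ralg e1 e2 e3 = Lgen (relI e1 e2 e3) (Rgens e1 e2 e3)"

definition finite_codim :: "cpoly set \<Rightarrow> ltriple set \<Rightarrow> ltriple set \<Rightarrow> bool" where
  "finite_codim I h R \<longleftrightarrow> (\<exists>F. finite F \<and> F \<subseteq> R \<and> R = Lspan I (h \<union> F))"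

definition is_lie_ideal :: "cpoly set \<Rightarrow> ltriple set \<Rightarrow> ltriple set \<Rightarrow> bool" where
  "is_lie_ideal I s h \<longleftrightarrow> is_subspace I s \<and> s \<subseteq> h \<and> (\<forall>x\<in>h. \<forall>y\<in>s. Lbr I x y \<in> s)"

fun derived :: "cpoly set \<Rightarrow> ltriple set \<Rightarrow> nat \<Rightarrow> ltriple set" where
  "derived I s 0 = s"
| "derived I s (Suc k) = Lspan I {Lbr I x y | x y. x \<in> derived I s k \<and> y \<in> derived I s k}"

definition is_solvable :: "cpoly set \<Rightarrow> ltriple set \<Rightarrow> bool" where
  "is_solvable I s \<longleftrightarrow> (\<exists>k. derived I s k = {Lzero I})"

end

theory Submission
  imports Defs "HOL-Computational_Algebra.Polynomial"
begin


section \<open>Ideal\<close>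

lemma relI_zero: "0 \<in> relI e1 e2 e3"
  unfolding relI_def by (rule CollectI, rule exI[of _ "\<lambda>i j. 0"]) simp

lemma relI_intro: "p = (\<Sum>i\<in>{1,2,3}. \<Sum>j\<in>{1,2,3}. c i j * relgen e1 e2 e3 i j) \<Longrightarrow> p \<in> relI e1 e2 e3"
  unfolding relI_def by blast

lemma relI_add: "p \<in> relI e1 e2 e3 \<Longrightarrow> q \<in> relI e1 e2 e3 \<Longrightarrow> p + q \<in> relI e1 e2 e3"
proof -
  assume "p \<in> relI e1 e2 e3" "q \<in> relI e1 e2 e3"
  then obtain c d where p: "p = (\<Sum>i\<in>{1,2,3}. \<Sum>j\<in>{1,2,3}. c i j * relgen e1 e2 e3 i j)"
    and q: "q = (\<Sum>i\<in>{1,2,3}. \<Sum>j\<in>{1,2,3}. d i j * relgen e1 e2 e3 i j)"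
    unfolding relI_def by blast
  have "p + q = (\<Sum>i\<in>{1,2,3}. \<Sum>j\<in>{1,2,3}. (c i j + d i j) * relgen e1 e2 e3 i j)"
    unfolding p q by (simp add: distrib_right sum.distrib)
  then show ?thesis by (rule relI_intro)
qed

lemma relI_mult: "p \<in> relI e1 e2 e3 \<Longrightarrow> q * p \<in> relI e1 e2 e3"
proof -
  assume "p \<in> relI e1 e2 e3"
  then obtain c where p: "p = (\<Sum>i\<in>{1,2,3}. \<Sum>j\<in>{1,2,3}. c i j * relgen e1 e2 e3 i j)"
    unfolding relI_def by blast
  have "q * p = (\<Sum>i\<in>{1,2,3}. \<Sum>j\<in>{1,2,3}. (q * c i j) * relgen e1 e2 e3 i j)"
    unfolding p by (simp only: sum_distrib_left mult.assoc)
  then show ?thesis by (rule relI_intro)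
qed

lemma relI_neg: "p \<in> relI e1 e2 e3 \<Longrightarrow> - p \<in> relI e1 e2 e3"
proof -
  assume "p \<in> relI e1 e2 e3"
  then have "(-1) * p \<in> relI e1 e2 e3" by (rule relI_mult)
  then show ?thesis by (metis mult_minus1)
qed

lemma relI_diff: "p \<in> relI e1 e2 e3 \<Longrightarrow> q \<in> relI e1 e2 e3 \<Longrightarrow> p - q \<in> relI e1 e2 e3"
  by (metis relI_add relI_neg diff_conv_add_uminus)

lemma relgen_in: "relgen e1 e2 e3 2 1 \<in> relI e1 e2 e3" "relgen e1 e2 e3 3 1 \<in> relI e1 e2 e3"
proof -
  have "relgen e1 e2 e3 2 1 = (\<Sum>i\<in>{1,2,3}. \<Sum>j\<in>{1,2,3}. (if i = 2 \<and> j = 1 then 1 else 0) * relgen e1 e2 e3 i j)"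
    by simp
  then show "relgen e1 e2 e3 2 1 \<in> relI e1 e2 e3" by (rule relI_intro)
  have "relgen e1 e2 e3 3 1 = (\<Sum>i\<in>{1,2,3}. \<Sum>j\<in>{1,2,3}. (if i = 3 \<and> j = 1 then 1 else 0) * relgen e1 e2 e3 i j)"
    by simp
  then show "relgen e1 e2 e3 3 1 \<in> relI e1 e2 e3" by (rule relI_intro)
qed

section \<open>Evaluation\<close>

type_synonym pt = "complex \<times> complex \<times> complex"

definition monoev :: "pt \<Rightarrow> nat \<times> nat \<times> nat \<Rightarrow> complex" where
  "monoev P m = fst P ^ fst m * fst (snd P) ^ fst (snd m) * snd (snd P) ^ snd (snd m)"

definition ev :: "pt \<Rightarrow> cpoly \<Rightarrow> complex" where
  "ev P p = (\<Sum>m\<in>Poly_Mapping.keys p. Poly_Mapping.lookup p m * monoev P m)"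

lemma ev_superset: "finite S \<Longrightarrow> Poly_Mapping.keys p \<subseteq> S \<Longrightarrow>
   ev P p = (\<Sum>m\<in>S. Poly_Mapping.lookup p m * monoev P m)"
  unfolding ev_def
  by (rule sum.mono_neutral_left) (auto simp: in_keys_iff)

lemma ev_add: "ev P (p + q) = ev P p + ev P q"
proof -
  let ?S = "Poly_Mapping.keys p \<union> Poly_Mapping.keys q"
  have f: "finite ?S" by simp
  have "ev P (p + q) = (\<Sum>m\<in>?S. Poly_Mapping.lookup (p+q) m * monoev P m)"
    by (rule ev_superset[OF f]) (simp add: keys_add)
  also have "\<dots> = (\<Sum>m\<in>?S. Poly_Mapping.lookup p m * monoev P m) + (\<Sum>m\<in>?S. Poly_Mapping.lookup q m * monoev P m)"
    by (simp add: lookup_add distrib_right sum.distrib)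
  also have "\<dots> = ev P p + ev P q"
    using ev_superset[OF f, of p P] ev_superset[OF f, of q P] by simp
  finally show ?thesis .
qed

lemma ev_zero[simp]: "ev P 0 = 0" by (simp add: ev_def)

lemma ev_single: "ev P (Poly_Mapping.single m c) = c * monoev P m"
  by (subst ev_superset[of "{m}"]) auto

lemma ev_sum: "ev P (sum f A) = (\<Sum>a\<in>A. ev P (f a))"
  by (induction A rule: infinite_finite_induct) (auto simp: ev_add)

lemma pm_expand: "p = (\<Sum>m\<in>Poly_Mapping.keys p. Poly_Mapping.single m (Poly_Mapping.lookup p m))"
  by (rule poly_mapping_eqI) (simp add: lookup_sum lookup_single when_def in_keys_iff)

lemma monoev_add: "monoev P (a + b) = monoev P a * monoev P b"
  by (cases a; cases b) (simp add: monoev_def power_add)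

lemma ev_mult: "ev P (p * q) = ev P p * ev P q"
proof -
  have "p * q = (\<Sum>m\<in>Poly_Mapping.keys p. \<Sum>n\<in>Poly_Mapping.keys q.
      Poly_Mapping.single (m + n) (Poly_Mapping.lookup p m * Poly_Mapping.lookup q n))"
    apply (subst pm_expand[of p], subst pm_expand[of q])
    by (simp add: sum_product mult_single)
  then have "ev P (p * q) = (\<Sum>m\<in>Poly_Mapping.keys p. \<Sum>n\<in>Poly_Mapping.keys q.
      (Poly_Mapping.lookup p m * monoev P m) * (Poly_Mapping.lookup q n * monoev P n))"
    by (simp add: ev_sum ev_single monoev_add mult_ac)
  then show ?thesis by (simp add: ev_def sum_product)
qed

lemma ev_neg: "ev P (- p) = - ev P p"
proof -
  have "ev P p + ev P (-p) = 0" using ev_add[of P p "-p"] by simp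
  then show ?thesis by (simp add: eq_neg_iff_add_eq_0 add.commute)
qed

lemma ev_diff: "ev P (p - q) = ev P p - ev P q"
  using ev_add[of P p "-q"] ev_neg[of P q] by simp

lemma ev_pconst[simp]: "ev P (pconst c) = c"
  by (simp add: pconst_def ev_single monoev_def)

lemma ev_one[simp]: "ev P 1 = 1"
  by (metis ev_pconst pconst_def single_one zero_prod_def)

lemma ev_power: "ev P (p ^ n) = ev P p ^ n"
  by (induction n) (simp_all add: ev_mult)

lemma ev_pvar1[simp]: "ev P (pvar 1) = fst P"
  by (simp add: pvar_def ev_single monoev_def)
lemma ev_pvar1'[simp]: "ev P (pvar (Suc 0)) = fst P"
  by (simp add: pvar_def ev_single monoev_def)
lemma ev_pvar2[simp]: "ev P (pvar 2) = fst (snd P)"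
  by (simp add: pvar_def ev_single monoev_def)
lemma ev_pvar3[simp]: "ev P (pvar 3) = snd (snd P)"
  by (simp add: pvar_def ev_single monoev_def)

definition onC :: "complex \<Rightarrow> complex \<Rightarrow> complex \<Rightarrow> pt \<Rightarrow> bool" where
  "onC e1 e2 e3 P \<longleftrightarrow> fst P ^ 2 + e1 = fst (snd P) ^ 2 + e2 \<and> fst P ^ 2 + e1 = snd (snd P) ^ 2 + e3"

lemma ev_relgen: "onC e1 e2 e3 P \<Longrightarrow> i \<in> {1,2,3} \<Longrightarrow> j \<in> {1,2,3} \<Longrightarrow> ev P (relgen e1 e2 e3 i j) = 0"
proof -
  assume on: "onC e1 e2 e3 P" and ij: "i \<in> {1,2,3}" "j \<in> {1,2,3}"
  have key: "ev P (relgen e1 e2 e3 i j) = (ev P (pvar i)^2 + evec e1 e2 e3 i) - (ev P (pvar j)^2 + evec e1 e2 e3 j)"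
    by (simp add: relgen_def ev_add ev_diff ev_power)
  have v: "ev P (pvar k)^2 + evec e1 e2 e3 k = fst P ^ 2 + e1" if "k \<in> {1,2,3}" for k
    using that on unfolding onC_def by (auto simp: evec_def)
  show ?thesis using key v[OF ij(1)] v[OF ij(2)] by simp
qed

lemma ev_relI: "onC e1 e2 e3 P \<Longrightarrow> p \<in> relI e1 e2 e3 \<Longrightarrow> ev P p = 0"
proof -
  assume on: "onC e1 e2 e3 P" and "p \<in> relI e1 e2 e3"
  then obtain c where p: "p = (\<Sum>i\<in>{1,2,3}. \<Sum>j\<in>{1,2,3}. c i j * relgen e1 e2 e3 i j)"
    unfolding relI_def by blast
  have "ev P p = (\<Sum>i\<in>{1,2,3}. \<Sum>j\<in>{1,2,3}. ev P (c i j) * ev P (relgen e1 e2 e3 i j))"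
    unfolding p by (simp only: ev_sum ev_mult)
  also have "\<dots> = 0"
    by (intro sum.neutral ballI) (simp add: ev_relgen[OF on])
  finally show ?thesis .
qed




definition ev3 :: "pt \<Rightarrow> ptriple \<Rightarrow> pt" where
  "ev3 P x = (ev P (fst x), ev P (fst (snd x)), ev P (snd (snd x)))"

definition cr :: "pt \<Rightarrow> pt \<Rightarrow> pt" where
  "cr a b = (fst (snd a) * snd (snd b) - snd (snd a) * fst (snd b),
             snd (snd a) * fst b - fst a * snd (snd b),
             fst a * fst (snd b) - fst (snd a) * fst b)"

definition sc :: "complex \<Rightarrow> pt \<Rightarrow> pt" where
  "sc c a = (c * fst a, c * fst (snd a), c * snd (snd a))"

lemma cr_simp[simp]: "cr (a1,a2,a3) (b1,b2,b3) = (a2*b3 - a3*b2, a3*b1 - a1*b3, a1*b2 - a2*b1)"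
  by (simp add: cr_def)
lemma sc_simp[simp]: "sc c (a1,a2,a3) = (c*a1, c*a2, c*a3)"
  by (simp add: sc_def)

definition phi :: "cpoly set \<Rightarrow> pt \<Rightarrow> ltriple \<Rightarrow> pt" where
  "phi I P X = ev3 P (rep I X)"

lemma ev3_add: "ev3 P (x + y) = ev3 P x + ev3 P y"
  by (simp add: ev3_def ev_add)

lemma ev3_pbr: "ev3 P (pbr x y) = cr (ev3 P x) (ev3 P y)"
  by (cases x; cases y) (simp add: ev3_def pbr_def ev_diff ev_mult)

lemma ev3_pscale: "ev3 P (pscale c x) = sc c (ev3 P x)"
  by (cases x) (simp add: ev3_def pscale_def ev_mult)

lemma ev3_zero: "ev3 P 0 = 0"
  by (simp add: ev3_def zero_prod_def)

lemma pcoset_eq: "pcoset (relI e1 e2 e3) p = pcoset (relI e1 e2 e3) q \<Longrightarrow> p - q \<in> relI e1 e2 e3"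
proof -
  assume a: "pcoset (relI e1 e2 e3) p = pcoset (relI e1 e2 e3) q"
  have "p \<in> pcoset (relI e1 e2 e3) p" by (simp add: pcoset_def relI_zero)
  then have "p \<in> pcoset (relI e1 e2 e3) q" using a by simp
  then show ?thesis by (simp add: pcoset_def)
qed

lemma phi_cls: "onC e1 e2 e3 P \<Longrightarrow> phi (relI e1 e2 e3) P (cls (relI e1 e2 e3) x) = ev3 P x"
proof -
  assume on: "onC e1 e2 e3 P"
  let ?I = "relI e1 e2 e3"
  define y where "y = rep ?I (cls ?I x)"
  have "cls ?I y = cls ?I x" unfolding y_def rep_def by (rule someI[of _ x]) simp
  then have d: "fst y - fst x \<in> ?I" "fst (snd y) - fst (snd x) \<in> ?I" "snd (snd y) - snd (snd x) \<in> ?I"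
    by (cases x; cases y; simp add: cls_def pcoset_eq)+
  have "ev P (fst y) = ev P (fst x)" using ev_relI[OF on d(1)] by (simp add: ev_diff)
  moreover have "ev P (fst (snd y)) = ev P (fst (snd x))" using ev_relI[OF on d(2)] by (simp add: ev_diff)
  moreover have "ev P (snd (snd y)) = ev P (snd (snd x))" using ev_relI[OF on d(3)] by (simp add: ev_diff)
  ultimately show ?thesis unfolding phi_def y_def[symmetric] ev3_def by simp
qed

lemma phi_Ladd: "onC e1 e2 e3 P \<Longrightarrow> phi (relI e1 e2 e3) P (Ladd (relI e1 e2 e3) X Y) =
   phi (relI e1 e2 e3) P X + phi (relI e1 e2 e3) P Y"
  by (unfold Ladd_def, subst phi_cls, assumption) (simp add: ev3_add phi_def)

lemma phi_Lscale: "onC e1 e2 e3 P \<Longrightarrow> phi (relI e1 e2 e3) P (Lscale (relI e1 e2 e3) c X) =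
   sc c (phi (relI e1 e2 e3) P X)"
  by (unfold Lscale_def, subst phi_cls, assumption) (simp add: ev3_pscale phi_def)

lemma phi_Lbr: "onC e1 e2 e3 P \<Longrightarrow> phi (relI e1 e2 e3) P (Lbr (relI e1 e2 e3) X Y) =
   cr (phi (relI e1 e2 e3) P X) (phi (relI e1 e2 e3) P Y)"
  by (unfold Lbr_def, subst phi_cls, assumption) (simp add: ev3_pbr phi_def)

lemma phi_Lzero: "onC e1 e2 e3 P \<Longrightarrow> phi (relI e1 e2 e3) P (Lzero (relI e1 e2 e3)) = 0"
  by (unfold Lzero_def, subst phi_cls, assumption) (simp add: ev3_zero)

section \<open>so3 over C is simple\<close>

lemma simple_so3:
  assumes add: "\<And>u v. u \<in> J \<Longrightarrow> v \<in> J \<Longrightarrow> u + v \<in> J"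
    and scl: "\<And>c u. u \<in> J \<Longrightarrow> sc c u \<in> J"
    and crs: "\<And>u v. v \<in> J \<Longrightarrow> cr u v \<in> J"
    and x: "x \<in> J" "x \<noteq> 0"
  shows "v \<in> J"
proof -
  obtain a b c where xd: "x = (a,b,c)" by (cases x) auto
  have e1x: "(a,0,0) \<in> J"
  proof -
    have "cr (1,0,0) (cr (1,0,0) x) \<in> J" using crs x by blast
    then have "x + cr (1,0,0) (cr (1,0,0) x) \<in> J" using add x by blast
    then show ?thesis by (simp add: xd)
  qed
  have e2x: "(0,b,0) \<in> J"
  proof -
    have "cr (0,1,0) (cr (0,1,0) x) \<in> J" using crs x by blast
    then have "x + cr (0,1,0) (cr (0,1,0) x) \<in> J" using add x by blast
    then show ?thesis by (simp add: xd)
  qed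
  have e3x: "(0,0,c) \<in> J"
  proof -
    have "cr (0,0,1) (cr (0,0,1) x) \<in> J" using crs x by blast
    then have "x + cr (0,0,1) (cr (0,0,1) x) \<in> J" using add x by blast
    then show ?thesis by (simp add: xd)
  qed
  have one: "(1,0,0) \<in> J \<or> (0,1,0) \<in> J \<or> (0,0,1) \<in> J"
  proof -
    have "a \<noteq> 0 \<or> b \<noteq> 0 \<or> c \<noteq> 0" using x(2) xd by (auto simp: zero_prod_def)
    moreover have "a \<noteq> 0 \<Longrightarrow> (1,0,0) \<in> J" using scl[OF e1x, of "1/a"] by simp
    moreover have "b \<noteq> 0 \<Longrightarrow> (0,1,0) \<in> J" using scl[OF e2x, of "1/b"] by simp
    moreover have "c \<noteq> 0 \<Longrightarrow> (0,0,1) \<in> J" using scl[OF e3x, of "1/c"] by simp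
    ultimately show ?thesis by blast
  qed
  have all: "(1,0,0) \<in> J \<and> (0,1,0) \<in> J \<and> (0,0,1) \<in> J"
  proof -
    have r1: "(0,1,0) \<in> J \<Longrightarrow> (0,0,1) \<in> J" using crs[of "(0,1,0)" "(1,0,0)"] by simp
    have r2: "(0,0,1) \<in> J \<Longrightarrow> (1,0,0) \<in> J" using crs[of "(0,0,1)" "(0,1,0)"] by simp
    have r3: "(1,0,0) \<in> J \<Longrightarrow> (0,1,0) \<in> J" using crs[of "(1,0,0)" "(0,0,1)"] by simp
    show ?thesis using one r1 r2 r3 by blast
  qed
  obtain v1 v2 v3 where vd: "v = (v1,v2,v3)" by (cases v) auto
  have "sc v1 (1,0,0) + (sc v2 (0,1,0) + sc v3 (0,0,1)) \<in> J"
    using all add scl by blast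
  then show ?thesis by (simp add: vd)
qed




lemma sc_add_left: "sc (a + b) u = sc a u + sc b u"
  by (simp add: sc_def distrib_right)
lemma sc_add_right: "sc c (u + v) = sc c u + sc c v"
  by (simp add: sc_def distrib_left)
lemma sc_sc: "sc a (sc b u) = sc (a * b) u"
  by (simp add: sc_def mult.assoc)
lemma sc_zero_left[simp]: "sc 0 u = 0"
  by (simp add: sc_def zero_prod_def)
lemma sc_zero_right[simp]: "sc c 0 = 0"
  by (simp add: sc_def zero_prod_def)
lemma sc_sum: "sc c (sum g A) = (\<Sum>x\<in>A. sc c (g x))"
  by (induction A rule: infinite_finite_induct) (simp_all add: sc_add_right)
lemma sc_components: "fst (sc c u) = c * fst u" "fst (snd (sc c u)) = c * fst (snd u)"
   "snd (snd (sc c u)) = c * snd (snd u)"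
  by (simp_all add: sc_def)

lemma subspaceD:
  assumes "is_subspace I h"
  shows "Lzero I \<in> h" "x \<in> h \<Longrightarrow> y \<in> h \<Longrightarrow> Ladd I x y \<in> h" "x \<in> h \<Longrightarrow> Lscale I c x \<in> h"
  using assms unfolding is_subspace_def by auto

lemma derived_full:
  assumes on: "onC e1 e2 e3 P"
    and full: "\<forall>v. \<exists>x\<in>s. phi (relI e1 e2 e3) P x = v"
  shows "\<forall>v. \<exists>x\<in>derived (relI e1 e2 e3) s j. phi (relI e1 e2 e3) P x = v"
proof (induction j)
  case 0
  then show ?case using full by simp
next
  case (Suc j)
  let ?I = "relI e1 e2 e3"
  let ?D = "derived ?I s j"
  let ?B = "{Lbr ?I x y | x y. x \<in> ?D \<and> y \<in> ?D}"
  show ?case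
  proof
    fix v :: pt
    obtain v1 v2 v3 where vd: "v = (v1,v2,v3)" by (cases v) auto
    obtain x1 where x1: "x1 \<in> ?D" "phi ?I P x1 = (1,0,0)" using Suc by blast
    obtain x2 where x2: "x2 \<in> ?D" "phi ?I P x2 = (0,1,0)" using Suc by blast
    obtain x3 where x3: "x3 \<in> ?D" "phi ?I P x3 = (0,0,1)" using Suc by blast
    have b1: "Lbr ?I x2 x3 \<in> Lspan ?I ?B" using x2 x3 by (intro Lspan.span_base) blast
    have b2: "Lbr ?I x3 x1 \<in> Lspan ?I ?B" using x1 x3 by (intro Lspan.span_base) blast
    have b3: "Lbr ?I x1 x2 \<in> Lspan ?I ?B" using x1 x2 by (intro Lspan.span_base) blast
    let ?z = "Ladd ?I (Lscale ?I v1 (Lbr ?I x2 x3)) (Ladd ?I (Lscale ?I v2 (Lbr ?I x3 x1)) (Lscale ?I v3 (Lbr ?I x1 x2)))"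
    have "?z \<in> Lspan ?I ?B"
      using b1 b2 b3 by (intro Lspan.span_add Lspan.span_scale)
    moreover have "phi ?I P ?z = v"
      using x1 x2 x3 by (simp add: phi_Ladd[OF on] phi_Lscale[OF on] phi_Lbr[OF on] vd)
    ultimately show "\<exists>x\<in>derived ?I s (Suc j). phi ?I P x = v" by auto
  qed
qed

lemma span_decomp:
  assumes sub: "is_subspace (relI e1 e2 e3) h" and fin: "finite F"
    and X: "X \<in> Lspan (relI e1 e2 e3) (h \<union> F)"
  shows "\<exists>y\<in>h. \<exists>c. \<forall>P. onC e1 e2 e3 P \<longrightarrow>
     phi (relI e1 e2 e3) P X = phi (relI e1 e2 e3) P y + (\<Sum>f\<in>F. sc (c f) (phi (relI e1 e2 e3) P f))"
  using X
proof (induction rule: Lspan.induct)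
  case span_zero
  show ?case
    by (rule bexI[of _ "Lzero (relI e1 e2 e3)"], rule exI[of _ "\<lambda>_. 0"])
       (simp_all add: phi_Lzero subspaceD[OF sub])
next
  case (span_base x)
  show ?case
  proof (cases "x \<in> h")
    case True
    then show ?thesis
      by (intro bexI[of _ x] exI[of _ "\<lambda>_. 0"]) simp_all
  next
    case False
    then have xF: "x \<in> F" using span_base by blast
    have "(\<Sum>f\<in>F. sc (if f = x then 1 else 0) (phi (relI e1 e2 e3) P f)) = phi (relI e1 e2 e3) P x" for P
    proof -
      have "(\<Sum>f\<in>F. sc (if f = x then 1 else 0) (phi (relI e1 e2 e3) P f))
          = (\<Sum>f\<in>F. if f = x then phi (relI e1 e2 e3) P f else 0)"
        by (rule sum.cong) (auto simp: sc_def zero_prod_def)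
      also have "\<dots> = phi (relI e1 e2 e3) P x" using xF fin by simp
      finally show ?thesis .
    qed
    then show ?thesis
      by (intro bexI[of _ "Lzero (relI e1 e2 e3)"] exI[of _ "\<lambda>f. if f = x then 1 else 0"])
         (simp_all add: phi_Lzero subspaceD[OF sub])
  qed
next
  case (span_add x y)
  then obtain y1 c1 y2 c2 where y1: "y1 \<in> h" "\<forall>P. onC e1 e2 e3 P \<longrightarrow>
     phi (relI e1 e2 e3) P x = phi (relI e1 e2 e3) P y1 + (\<Sum>f\<in>F. sc (c1 f) (phi (relI e1 e2 e3) P f))"
    and y2: "y2 \<in> h" "\<forall>P. onC e1 e2 e3 P \<longrightarrow>
     phi (relI e1 e2 e3) P y = phi (relI e1 e2 e3) P y2 + (\<Sum>f\<in>F. sc (c2 f) (phi (relI e1 e2 e3) P f))"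
    by blast
  show ?case
  proof (intro bexI[of _ "Ladd (relI e1 e2 e3) y1 y2"] exI[of _ "\<lambda>f. c1 f + c2 f"] allI impI)
    fix P assume on: "onC e1 e2 e3 P"
    show "phi (relI e1 e2 e3) P (Ladd (relI e1 e2 e3) x y) =
      phi (relI e1 e2 e3) P (Ladd (relI e1 e2 e3) y1 y2) + (\<Sum>f\<in>F. sc (c1 f + c2 f) (phi (relI e1 e2 e3) P f))"
      by (simp add: phi_Ladd[OF on] y1(2)[rule_format, OF on] y2(2)[rule_format, OF on] sc_add_left sum.distrib add_ac)
  qed (use y1 y2 subspaceD[OF sub] in auto)
next
  case (span_scale x c)
  then obtain y1 c1 where y1: "y1 \<in> h" "\<forall>P. onC e1 e2 e3 P \<longrightarrow>
     phi (relI e1 e2 e3) P x = phi (relI e1 e2 e3) P y1 + (\<Sum>f\<in>F. sc (c1 f) (phi (relI e1 e2 e3) P f))"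
    by blast
  show ?case
  proof (intro bexI[of _ "Lscale (relI e1 e2 e3) c y1"] exI[of _ "\<lambda>f. c * c1 f"] allI impI)
    fix P assume on: "onC e1 e2 e3 P"
    show "phi (relI e1 e2 e3) P (Lscale (relI e1 e2 e3) c x) =
      phi (relI e1 e2 e3) P (Lscale (relI e1 e2 e3) c y1) + (\<Sum>f\<in>F. sc (c * c1 f) (phi (relI e1 e2 e3) P f))"
      by (simp add: phi_Lscale[OF on] y1(2)[rule_format, OF on] sc_add_right sc_sum sc_sc)
  qed (use y1 subspaceD[OF sub] in auto)
qed

lemma h_sum:
  assumes sub: "is_subspace (relI e1 e2 e3) h" and fin: "finite K" and y: "\<forall>k\<in>K. y k \<in> h"
  shows "\<exists>z\<in>h. \<forall>P. onC e1 e2 e3 P \<longrightarrow>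
     phi (relI e1 e2 e3) P z = (\<Sum>k\<in>K. sc (a k) (phi (relI e1 e2 e3) P (y k)))"
  using fin y
proof (induction K rule: finite_induct)
  case empty
  then show ?case
    by (intro bexI[of _ "Lzero (relI e1 e2 e3)"]) (simp_all add: phi_Lzero subspaceD[OF sub])
next
  case (insert k K)
  then obtain z where z: "z \<in> h" "\<forall>P. onC e1 e2 e3 P \<longrightarrow>
     phi (relI e1 e2 e3) P z = (\<Sum>k\<in>K. sc (a k) (phi (relI e1 e2 e3) P (y k)))" by auto
  show ?case
  proof (intro bexI[of _ "Ladd (relI e1 e2 e3) (Lscale (relI e1 e2 e3) (a k) (y k)) z"] allI impI)
    fix P assume on: "onC e1 e2 e3 P"
    show "phi (relI e1 e2 e3) P (Ladd (relI e1 e2 e3) (Lscale (relI e1 e2 e3) (a k) (y k)) z) =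
       (\<Sum>k\<in>insert k K. sc (a k) (phi (relI e1 e2 e3) P (y k)))"
      using insert(1,2) by (simp add: phi_Ladd[OF on] phi_Lscale[OF on] z(2)[rule_format, OF on])
  qed (use z insert subspaceD[OF sub] in auto)
qed

lemma lin_dep:
  fixes c :: "'k \<Rightarrow> 'f \<Rightarrow> complex"
  assumes "finite F" "finite K" "card F < card K"
  shows "\<exists>a. (\<exists>k\<in>K. a k \<noteq> 0) \<and> (\<forall>f\<in>F. (\<Sum>k\<in>K. a k * c k f) = 0)"
  using assms
proof (induction F arbitrary: K c rule: finite_induct)
  case empty
  then obtain k0 where "k0 \<in> K" by (metis card.empty all_not_in_conv less_irrefl)
  then show ?case by (intro exI[of _ "\<lambda>_. 1"]) auto
next
  case (insert f F)
  show ?case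
  proof (cases "\<forall>k\<in>K. c k f = 0")
    case True
    have "card F < card K" using insert by simp
    then obtain a where a: "\<exists>k\<in>K. a k \<noteq> 0" "\<forall>g\<in>F. (\<Sum>k\<in>K. a k * c k g) = 0"
      using insert.IH[of K c] insert.prems by blast
    then show ?thesis using True by (intro exI[of _ a]) auto
  next
    case False
    then obtain k0 where k0: "k0 \<in> K" "c k0 f \<noteq> 0" by blast
    define K' where "K' = K - {k0}"
    have fK': "finite K'" using insert K'_def by simp
    have cK': "card F < card K'" using insert k0 K'_def by simp
    define c' where "c' k g = c k g - (c k f / c k0 f) * c k0 g" for k g
    obtain a' where a': "\<exists>k\<in>K'. a' k \<noteq> 0" "\<forall>g\<in>F. (\<Sum>k\<in>K'. a' k * c' k g) = 0"
      using insert.IH[OF fK' cK', of c'] by blast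
    define S where "S = (\<Sum>k\<in>K'. a' k * c k f)"
    define a where "a k = (if k = k0 then - S / c k0 f else a' k)" for k
    have split: "(\<Sum>k\<in>K. a k * c k g) = a k0 * c k0 g + (\<Sum>k\<in>K'. a' k * c k g)" for g
    proof -
      have "(\<Sum>k\<in>K. a k * c k g) = a k0 * c k0 g + (\<Sum>k\<in>K'. a k * c k g)"
        unfolding K'_def using k0 insert.prems by (simp add: sum.remove)
      also have "(\<Sum>k\<in>K'. a k * c k g) = (\<Sum>k\<in>K'. a' k * c k g)"
        by (rule sum.cong) (auto simp: a_def K'_def)
      finally show ?thesis .
    qed
    show ?thesis
    proof (intro exI[of _ a] conjI ballI)
      show "\<exists>k\<in>K. a k \<noteq> 0" using a'(1) by (auto simp: a_def K'_def)
    next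
      fix g assume g: "g \<in> insert f F"
      show "(\<Sum>k\<in>K. a k * c k g) = 0"
      proof (cases "g = f")
        case True
        then show ?thesis using k0 unfolding split by (simp add: a_def S_def)
      next
        case False
        then have gF: "g \<in> F" using g by simp
        have "0 = (\<Sum>k\<in>K'. a' k * c' k g)" using a'(2) gF by simp
        also have "\<dots> = (\<Sum>k\<in>K'. a' k * c k g - (a' k * c k f) / c k0 f * c k0 g)"
          by (rule sum.cong) (simp_all add: c'_def algebra_simps)
        also have "\<dots> = (\<Sum>k\<in>K'. a' k * c k g) - (\<Sum>k\<in>K'. (a' k * c k f) / c k0 f * c k0 g)"
          by (rule sum_subtractf)
        also have "(\<Sum>k\<in>K'. (a' k * c k f) / c k0 f * c k0 g) = S / c k0 f * c k0 g"
          by (simp add: S_def sum_divide_distrib sum_distrib_right)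
        finally have "(\<Sum>k\<in>K'. a' k * c k g) = S / c k0 f * c k0 g" by simp
        then show ?thesis unfolding split by (simp add: a_def)
      qed
    qed
  qed
qed

lemma comb0:
  fixes a :: "'k \<Rightarrow> complex"
  assumes "\<forall>f\<in>F. (\<Sum>k\<in>K. a k * c k f) = 0"
  shows "(\<Sum>k\<in>K. a k * (w k - (\<Sum>f\<in>F. c k f * u f))) = (\<Sum>k\<in>K. a k * w k)"
proof -
  have "(\<Sum>k\<in>K. a k * (w k - (\<Sum>f\<in>F. c k f * u f))) =
     (\<Sum>k\<in>K. a k * w k) - (\<Sum>k\<in>K. \<Sum>f\<in>F. a k * c k f * u f)"
    by (simp add: right_diff_distrib sum_subtractf sum_distrib_left mult.assoc)
  also have "(\<Sum>k\<in>K. \<Sum>f\<in>F. a k * c k f * u f) = (\<Sum>f\<in>F. (\<Sum>k\<in>K. a k * c k f) * u f)"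
    by (subst sum.swap) (simp add: sum_distrib_right)
  also have "\<dots> = 0" using assms by simp
  finally show ?thesis by simp
qed




lemma triple_eq: "fst u = fst v \<Longrightarrow> fst (snd u) = fst (snd v) \<Longrightarrow> snd (snd u) = snd (snd v) \<Longrightarrow> u = (v::pt)"
  by (simp add: prod_eq_iff)

lemma extract_h:
  assumes sub: "is_subspace (relI e1 e2 e3) h" and fin: "finite F"
    and W: "\<And>k. W k \<in> Lspan (relI e1 e2 e3) (h \<union> F)"
  shows "\<exists>z\<in>h. \<exists>a. (\<exists>k\<le>card F. a k \<noteq> 0) \<and> (\<forall>P. onC e1 e2 e3 P \<longrightarrow>
     phi (relI e1 e2 e3) P z = (\<Sum>k\<le>card F. sc (a k) (phi (relI e1 e2 e3) P (W k))))"
proof -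
  let ?ph = "phi (relI e1 e2 e3)"
  have "\<forall>k. \<exists>q. fst q \<in> h \<and> (\<forall>P. onC e1 e2 e3 P \<longrightarrow>
     ?ph P (W k) = ?ph P (fst q) + (\<Sum>f\<in>F. sc (snd q f) (?ph P f)))"
  proof
    fix k
    obtain y c where "y \<in> h" "\<forall>P. onC e1 e2 e3 P \<longrightarrow>
     ?ph P (W k) = ?ph P y + (\<Sum>f\<in>F. sc (c f) (?ph P f))"
      using span_decomp[OF sub fin W] by blast
    then show "\<exists>q. fst q \<in> h \<and> (\<forall>P. onC e1 e2 e3 P \<longrightarrow>
     ?ph P (W k) = ?ph P (fst q) + (\<Sum>f\<in>F. sc (snd q f) (?ph P f)))"
      by (intro exI[of _ "(y, c)"]) simp
  qed
  then have "\<exists>g. \<forall>k. fst (g k) \<in> h \<and> (\<forall>P. onC e1 e2 e3 P \<longrightarrow>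
     ?ph P (W k) = ?ph P (fst (g k)) + (\<Sum>f\<in>F. sc (snd (g k) f) (?ph P f)))"
    by (rule choice)
  then obtain g where g: "\<forall>k. fst (g k) \<in> h \<and> (\<forall>P. onC e1 e2 e3 P \<longrightarrow>
     ?ph P (W k) = ?ph P (fst (g k)) + (\<Sum>f\<in>F. sc (snd (g k) f) (?ph P f)))"
    by blast
  define y where "y k = fst (g k)" for k
  define c where "c k = snd (g k)" for k
  have y: "\<And>k. y k \<in> h" using g unfolding y_def by blast
  have yc: "\<And>k P. onC e1 e2 e3 P \<Longrightarrow> ?ph P (W k) = ?ph P (y k) + (\<Sum>f\<in>F. sc (c k f) (?ph P f))"
    using g unfolding y_def c_def by blast
  obtain a where a: "\<exists>k\<in>{..card F}. a k \<noteq> 0" "\<forall>f\<in>F. (\<Sum>k\<in>{..card F}. a k * c k f) = 0"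
    using lin_dep[of F "{..card F}" c] fin by auto
  obtain z where z: "z \<in> h" "\<forall>P. onC e1 e2 e3 P \<longrightarrow>
     ?ph P z = (\<Sum>k\<in>{..card F}. sc (a k) (?ph P (y k)))"
    using h_sum[OF sub, of "{..card F}" y a] y by auto
  show ?thesis
  proof (intro bexI[OF _ z(1)] exI[of _ a] conjI allI impI)
    show "\<exists>k\<le>card F. a k \<noteq> 0" using a(1) by auto
  next
    fix P assume on: "onC e1 e2 e3 P"
    have yk: "?ph P (y k) = ?ph P (W k) - (\<Sum>f\<in>F. sc (c k f) (?ph P f))" for k
      using yc[OF on, of k] by (simp add: eq_diff_eq)
    have "?ph P z = (\<Sum>k\<le>card F. sc (a k) (?ph P (W k) - (\<Sum>f\<in>F. sc (c k f) (?ph P f))))"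
      using yk by (simp add: z(2)[rule_format, OF on] atMost_atLeast0)
    also have "\<dots> = (\<Sum>k\<le>card F. sc (a k) (?ph P (W k)))"
    proof (rule triple_eq)
      show "fst (\<Sum>k\<le>card F. sc (a k) (?ph P (W k) - (\<Sum>f\<in>F. sc (c k f) (?ph P f)))) =
            fst (\<Sum>k\<le>card F. sc (a k) (?ph P (W k)))"
        using comb0[OF a(2), of "\<lambda>k. fst (?ph P (W k))" "\<lambda>f. fst (?ph P f)"]
        by (simp add: fst_sum sc_components)
      show "fst (snd (\<Sum>k\<le>card F. sc (a k) (?ph P (W k) - (\<Sum>f\<in>F. sc (c k f) (?ph P f))))) =
            fst (snd (\<Sum>k\<le>card F. sc (a k) (?ph P (W k))))"
        using comb0[OF a(2), of "\<lambda>k. fst (snd (?ph P (W k)))" "\<lambda>f. fst (snd (?ph P f))"]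
        by (simp add: fst_sum snd_sum sc_components)
      show "snd (snd (\<Sum>k\<le>card F. sc (a k) (?ph P (W k) - (\<Sum>f\<in>F. sc (c k f) (?ph P f))))) =
            snd (snd (\<Sum>k\<le>card F. sc (a k) (?ph P (W k))))"
        using comb0[OF a(2), of "\<lambda>k. snd (snd (?ph P (W k)))" "\<lambda>f. snd (snd (?ph P f))"]
        by (simp add: snd_sum sc_components)
    qed
    finally show "?ph P z = (\<Sum>k\<le>card F. sc (a k) (?ph P (W k)))" .
  qed
qed

primrec Wf :: "cpoly set \<Rightarrow> ltriple \<Rightarrow> ltriple \<Rightarrow> nat \<Rightarrow> ltriple" where
  "Wf I A B 0 = A"
| "Wf I A B (Suc k) = Lscale I (-1) (Lbr I (Lbr I (Wf I A B k) B) B)"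

lemma Wf_in: "A \<in> Lgen I S \<Longrightarrow> B \<in> Lgen I S \<Longrightarrow> Wf I A B k \<in> Lgen I S"
  by (induction k) (auto intro: Lgen.intros)

definition X1g :: "complex \<Rightarrow> complex \<Rightarrow> complex \<Rightarrow> ltriple" where
  "X1g e1 e2 e3 = cls (relI e1 e2 e3) (pvar 1, 0, 0)"
definition X2g :: "complex \<Rightarrow> complex \<Rightarrow> complex \<Rightarrow> ltriple" where
  "X2g e1 e2 e3 = cls (relI e1 e2 e3) (0, pvar 2, 0)"
definition X3g :: "complex \<Rightarrow> complex \<Rightarrow> complex \<Rightarrow> ltriple" where
  "X3g e1 e2 e3 = cls (relI e1 e2 e3) (0, 0, pvar 3)"

lemma Xg_in: "X1g e1 e2 e3 \<in> Ralg e1 e2 e3" "X2g e1 e2 e3 \<in> Ralg e1 e2 e3" "X3g e1 e2 e3 \<in> Ralg e1 e2 e3"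
  unfolding Ralg_def X1g_def X2g_def X3g_def Rgens_def by (auto intro: Lgen.gen_base)

lemma phi_Xg:
  assumes on: "onC e1 e2 e3 P"
  shows "phi (relI e1 e2 e3) P (X1g e1 e2 e3) = (fst P, 0, 0)"
    "phi (relI e1 e2 e3) P (X2g e1 e2 e3) = (0, fst (snd P), 0)"
    "phi (relI e1 e2 e3) P (X3g e1 e2 e3) = (0, 0, snd (snd P))"
  by (simp_all add: X1g_def X2g_def X3g_def phi_cls[OF on] ev3_def)

lemma phi_W1:
  assumes on: "onC e1 e2 e3 P"
  shows "phi (relI e1 e2 e3) P (Wf (relI e1 e2 e3) (X1g e1 e2 e3) (X2g e1 e2 e3) k)
     = (fst P * (fst (snd P)^2)^k, 0, 0)"
  by (induction k) (simp_all add: phi_Lscale[OF on] phi_Lbr[OF on] phi_Xg[OF on] power2_eq_square)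

lemma phi_W2:
  assumes on: "onC e1 e2 e3 P"
  shows "phi (relI e1 e2 e3) P (Wf (relI e1 e2 e3) (X2g e1 e2 e3) (X3g e1 e2 e3) k)
     = (0, fst (snd P) * (snd (snd P)^2)^k, 0)"
  by (induction k) (simp_all add: phi_Lscale[OF on] phi_Lbr[OF on] phi_Xg[OF on] power2_eq_square)

lemma phi_W3:
  assumes on: "onC e1 e2 e3 P"
  shows "phi (relI e1 e2 e3) P (Wf (relI e1 e2 e3) (X3g e1 e2 e3) (X1g e1 e2 e3) k)
     = (0, 0, snd (snd P) * (fst P^2)^k)"
  by (induction k) (simp_all add: phi_Lscale[OF on] phi_Lbr[OF on] phi_Xg[OF on] power2_eq_square)

lemma sum_sc_triple: "(\<Sum>k\<in>K. sc (a k) (x k, y k, z k)) = (\<Sum>k\<in>K. a k * x k, \<Sum>k\<in>K. a k * y k, \<Sum>k\<in>K. a k * z k)"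
  by (rule triple_eq) (simp_all add: fst_sum snd_sum)




lemma pconst_0[simp]: "pconst 0 = 0" by (simp add: pconst_def)
lemma pconst_add: "pconst (a + b) = pconst a + pconst b" by (simp add: pconst_def single_add)
lemma pconst_diff: "pconst (a - b) = pconst a - pconst b" by (simp add: pconst_def single_diff)
lemma pconst_mult: "pconst (a * b) = pconst a * pconst b" by (simp add: pconst_def mult_single)

definition emb :: "complex poly \<Rightarrow> cpoly" where
  "emb A = poly (map_poly pconst A) (pvar 1)"

lemma emb_0[simp]: "emb 0 = 0" by (simp add: emb_def)

lemma emb_pCons: "emb (pCons a A) = pconst a + pvar 1 * emb A"
  by (simp add: emb_def map_poly_pCons)

lemma emb_add: "emb (A + B) = emb A + emb B"
proof -
  have "map_poly pconst (A + B) = map_poly pconst A + map_poly pconst B"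
    by (rule poly_eqI) (simp add: coeff_map_poly pconst_add)
  then show ?thesis by (simp add: emb_def)
qed

lemma emb_smult: "emb (smult c A) = pconst c * emb A"
  by (simp add: emb_def map_poly_smult pconst_mult)

lemma ev_emb: "ev P (emb A) = poly A (fst P)"
  by (induction A) (simp_all add: emb_pCons ev_add ev_mult)

definition nf :: "complex poly \<Rightarrow> complex poly \<Rightarrow> complex poly \<Rightarrow> complex poly \<Rightarrow> cpoly" where
  "nf A B C D = emb A + emb B * pvar 2 + emb C * pvar 3 + emb D * (pvar 2 * pvar 3)"

definition NF :: "complex \<Rightarrow> complex \<Rightarrow> complex \<Rightarrow> cpoly \<Rightarrow> bool" where
  "NF e1 e2 e3 p \<longleftrightarrow> (\<exists>A B C D. p - nf A B C D \<in> relI e1 e2 e3)"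

lemma NF_add: "NF e1 e2 e3 p \<Longrightarrow> NF e1 e2 e3 q \<Longrightarrow> NF e1 e2 e3 (p + q)"
proof -
  assume "NF e1 e2 e3 p" "NF e1 e2 e3 q"
  then obtain A B C D A' B' C' D' where a: "p - nf A B C D \<in> relI e1 e2 e3"
     and b: "q - nf A' B' C' D' \<in> relI e1 e2 e3" unfolding NF_def by blast
  have "(p + q) - nf (A + A') (B + B') (C + C') (D + D') = (p - nf A B C D) + (q - nf A' B' C' D')"
    by (simp add: nf_def emb_add algebra_simps)
  then show ?thesis unfolding NF_def using relI_add[OF a b] by metis
qed

lemma NF_const_mult: "NF e1 e2 e3 p \<Longrightarrow> NF e1 e2 e3 (pconst c * p)"
proof -
  assume "NF e1 e2 e3 p"
  then obtain A B C D where a: "p - nf A B C D \<in> relI e1 e2 e3" unfolding NF_def by blast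
  have "pconst c * p - nf (smult c A) (smult c B) (smult c C) (smult c D) = pconst c * (p - nf A B C D)"
    by (simp add: nf_def emb_smult algebra_simps)
  then show ?thesis unfolding NF_def using relI_mult[OF a] by metis
qed

lemma NF_v1: "NF e1 e2 e3 p \<Longrightarrow> NF e1 e2 e3 (pvar 1 * p)"
proof -
  assume "NF e1 e2 e3 p"
  then obtain A B C D where a: "p - nf A B C D \<in> relI e1 e2 e3" unfolding NF_def by blast
  have "pvar 1 * p - nf (pCons 0 A) (pCons 0 B) (pCons 0 C) (pCons 0 D) = pvar 1 * (p - nf A B C D)"
    by (simp add: nf_def emb_pCons algebra_simps)
  then show ?thesis unfolding NF_def using relI_mult[OF a] by metis
qed

definition Qp :: "complex \<Rightarrow> complex poly \<Rightarrow> complex poly" where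
  "Qp d B = pCons 0 (pCons 0 B) + smult d B"

lemma emb_Qp: "emb (Qp d B) = pvar 1 * (pvar 1 * emb B) + pconst d * emb B"
  by (simp add: Qp_def emb_add emb_pCons emb_smult)

lemma NF_v2: "NF e1 e2 e3 p \<Longrightarrow> NF e1 e2 e3 (pvar 2 * p)"
proof -
  assume "NF e1 e2 e3 p"
  then obtain A B C D where a: "p - nf A B C D \<in> relI e1 e2 e3" unfolding NF_def by blast
  have "pvar 2 * p - nf (Qp (e1 - e2) B) A (Qp (e1 - e2) D) C
     = pvar 2 * (p - nf A B C D) + (emb B + emb D * pvar 3) * relgen e1 e2 e3 2 1"
    by (simp add: nf_def emb_Qp relgen_def evec_def pconst_diff algebra_simps power2_eq_square)
  moreover have "pvar 2 * (p - nf A B C D) + (emb B + emb D * pvar 3) * relgen e1 e2 e3 2 1 \<in> relI e1 e2 e3"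
    by (intro relI_add relI_mult a relgen_in)
  ultimately show ?thesis unfolding NF_def by metis
qed

lemma NF_v3: "NF e1 e2 e3 p \<Longrightarrow> NF e1 e2 e3 (pvar 3 * p)"
proof -
  assume "NF e1 e2 e3 p"
  then obtain A B C D where a: "p - nf A B C D \<in> relI e1 e2 e3" unfolding NF_def by blast
  have "pvar 3 * p - nf (Qp (e1 - e3) C) (Qp (e1 - e3) D) A B
     = pvar 3 * (p - nf A B C D) + (emb C + emb D * pvar 2) * relgen e1 e2 e3 3 1"
    by (simp add: nf_def emb_Qp relgen_def evec_def pconst_diff algebra_simps power2_eq_square)
  moreover have "pvar 3 * (p - nf A B C D) + (emb C + emb D * pvar 2) * relgen e1 e2 e3 3 1 \<in> relI e1 e2 e3"
    by (intro relI_add relI_mult a relgen_in)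
  ultimately show ?thesis unfolding NF_def by metis
qed

lemma NF_const: "NF e1 e2 e3 (pconst c)"
proof -
  have "pconst c - nf [:c:] 0 0 0 = 0" by (simp add: nf_def emb_pCons)
  then show ?thesis unfolding NF_def using relI_zero by metis
qed

lemma NF_pow:
  assumes step: "\<And>q. NF e1 e2 e3 q \<Longrightarrow> NF e1 e2 e3 (x * q)"
  shows "NF e1 e2 e3 q \<Longrightarrow> NF e1 e2 e3 (x ^ n * q)"
  by (induction n) (simp_all add: mult.assoc step)

lemma single_one3: "Poly_Mapping.single (0,0,0) 1 = (1::cpoly)"
  by (metis single_one zero_prod_def)

lemma pvar_pow1: "pvar 1 ^ a = Poly_Mapping.single (a,0,0) 1"
  by (induction a) (simp_all add: single_one3 pvar_def mult_single)
lemma pvar_pow2: "pvar 2 ^ a = Poly_Mapping.single (0,a,0) 1"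
  by (induction a) (simp_all add: single_one3 pvar_def mult_single)
lemma pvar_pow3: "pvar 3 ^ a = Poly_Mapping.single (0,0,a) 1"
  by (induction a) (simp_all add: single_one3 pvar_def mult_single)

lemma monomial_eq: "Poly_Mapping.single (a,b,c) k = pvar 1 ^ a * (pvar 2 ^ b * (pvar 3 ^ c * pconst k))"
  unfolding pvar_pow1 pvar_pow2 pvar_pow3 pconst_def by (simp add: mult_single)

lemma NF_all: "NF e1 e2 e3 p"
proof -
  have monoev: "NF e1 e2 e3 (Poly_Mapping.single m k)" for m k
  proof -
    obtain a b c where m: "m = (a,b,c)" by (cases m) auto
    show ?thesis unfolding m monomial_eq
      by (intro NF_pow[OF NF_v1] NF_pow[OF NF_v2] NF_pow[OF NF_v3] NF_const)
  qed
  have zero: "NF e1 e2 e3 0" using NF_const[of e1 e2 e3 0] by simp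
  have "NF e1 e2 e3 (\<Sum>m\<in>S. Poly_Mapping.single m (Poly_Mapping.lookup p m))" for S
    by (induction S rule: infinite_finite_induct) (simp_all add: zero NF_add monoev)
  then show ?thesis using pm_expand[of p] by metis
qed

lemma four:
  fixes a b c d y z :: complex
  assumes "a + b*y + c*z + d*(y*z) = 0" "a + b*(-y) + c*z + d*((-y)*z) = 0"
    "a + b*y + c*(-z) + d*(y*(-z)) = 0" "a + b*(-y) + c*(-z) + d*((-y)*(-z)) = 0"
    and ny: "y \<noteq> 0" and nz: "z \<noteq> 0"
  shows "a = 0 \<and> b = 0 \<and> c = 0 \<and> d = 0"
proof -
  have "4*a = 0" using assms(1-4) by algebra
  then have A: "a = 0" by simp
  have "4*(b*y) = 0" using assms(1-4) by algebra
  then have B: "b = 0" using ny by simp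
  have "4*(c*z) = 0" using assms(1-4) by algebra
  then have C: "c = 0" using nz by simp
  have "4*(d*(y*z)) = 0" using assms(1-4) by algebra
  then have D: "d = 0" using ny nz by simp
  show ?thesis using A B C D by simp
qed

lemma finite_sq_pre: "finite Z \<Longrightarrow> finite {t::complex. t^2 + e \<in> Z}"
proof -
  assume fZ: "finite Z"
  have "{t::complex. t^2 + e \<in> Z} \<subseteq> (\<Union>l\<in>Z. {csqrt (l - e), - csqrt (l - e)})"
  proof
    fix t :: complex assume "t \<in> {t. t^2 + e \<in> Z}"
    then have tz: "t^2 + e \<in> Z" by simp
    have "t^2 = (csqrt (t^2 + e - e))^2" by simp
    then have "t = csqrt (t^2 + e - e) \<or> t = - csqrt (t^2 + e - e)" using power2_eq_iff by blast
    then show "t \<in> (\<Union>l\<in>Z. {csqrt (l - e), - csqrt (l - e)})" using tz by blast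
  qed
  moreover have "finite (\<Union>l\<in>Z. {csqrt (l - e), - csqrt (l - e)})" using fZ by simp
  ultimately show ?thesis by (rule finite_subset)
qed

lemma poly_zero_cofinite: "finite T \<Longrightarrow> (\<And>t. t \<notin> T \<Longrightarrow> poly A (t::complex) = 0) \<Longrightarrow> A = 0"
proof (rule ccontr)
  assume fT: "finite T" and h: "\<And>t. t \<notin> T \<Longrightarrow> poly A t = 0" and nz: "A \<noteq> 0"
  have "UNIV - T \<subseteq> {t. poly A t = 0}" using h by blast
  moreover have "infinite (UNIV - T :: complex set)"
    using fT by (simp add: Diff_infinite_finite infinite_UNIV_char_0)
  ultimately have "infinite {t. poly A t = 0}" using finite_subset by blast
  then show False using poly_roots_finite[OF nz] by simp
qed

lemma NS:
  assumes p: "p \<notin> relI e1 e2 e3" and fZ: "finite Z"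
  shows "\<exists>P. onC e1 e2 e3 P \<and> fst P ^ 2 + e1 \<notin> Z \<and> ev P p \<noteq> 0"
proof (rule ccontr)
  assume "\<not> ?thesis"
  then have H: "\<And>P. onC e1 e2 e3 P \<Longrightarrow> fst P ^ 2 + e1 \<notin> Z \<Longrightarrow> ev P p = 0" by blast
  obtain A B C D where pn: "p - nf A B C D \<in> relI e1 e2 e3" using NF_all unfolding NF_def by blast
  have evp: "ev P p = poly A (fst P) + poly B (fst P) * fst (snd P) + poly C (fst P) * snd (snd P)
      + poly D (fst P) * (fst (snd P) * snd (snd P))" if on: "onC e1 e2 e3 P" for P
  proof -
    have "ev P (p - nf A B C D) = 0" by (rule ev_relI[OF on pn])
    then have "ev P p = ev P (nf A B C D)" by (simp add: ev_diff)
    then show ?thesis by (simp add: nf_def ev_add ev_mult ev_emb)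
  qed
  define T where "T = {t::complex. t^2 + e1 \<in> insert e2 (insert e3 Z)}"
  have fT: "finite T" unfolding T_def using fZ by (intro finite_sq_pre) simp
  have all0: "poly A t = 0 \<and> poly B t = 0 \<and> poly C t = 0 \<and> poly D t = 0" if t: "t \<notin> T" for t
  proof -
    define y where "y = csqrt (t^2 + e1 - e2)"
    define z where "z = csqrt (t^2 + e1 - e3)"
    have ny: "y \<noteq> 0" using t by (simp add: y_def T_def)
    have nz: "z \<noteq> 0" using t by (simp add: z_def T_def)
    have y2: "y^2 = t^2 + e1 - e2" by (simp add: y_def)
    have z2: "z^2 = t^2 + e1 - e3" by (simp add: z_def)
    have nZ: "t^2 + e1 \<notin> Z" using t by (simp add: T_def)
    have on: "onC e1 e2 e3 (t, y', z')" if "y' = y \<or> y' = -y" "z' = z \<or> z' = -z" for y' z'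
    proof -
      have "y'^2 = y^2" "z'^2 = z^2" using that by auto
      then show ?thesis unfolding onC_def using y2 z2 by simp
    qed
    have E: "poly A t + poly B t * y' + poly C t * z' + poly D t * (y' * z') = 0"
      if "y' = y \<or> y' = -y" "z' = z \<or> z' = -z" for y' z'
      using H[OF on[OF that]] evp[OF on[OF that]] nZ by simp
    show ?thesis
      by (rule four[OF E E E E ny nz]) simp_all
  qed
  have "A = 0" using poly_zero_cofinite[OF fT] all0 by blast
  moreover have "B = 0" using poly_zero_cofinite[OF fT] all0 by blast
  moreover have "C = 0" using poly_zero_cofinite[OF fT] all0 by blast
  moreover have "D = 0" using poly_zero_cofinite[OF fT] all0 by blast
  ultimately have "p \<in> relI e1 e2 e3" using pn by (simp add: nf_def)
  then show False using p by simp
qed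




lemma cls_zero:
  assumes "fst x0 \<in> relI e1 e2 e3" "fst (snd x0) \<in> relI e1 e2 e3" "snd (snd x0) \<in> relI e1 e2 e3"
  shows "cls (relI e1 e2 e3) x0 = Lzero (relI e1 e2 e3)"
proof -
  have pc: "pcoset (relI e1 e2 e3) a = pcoset (relI e1 e2 e3) 0" if a: "a \<in> relI e1 e2 e3" for a
  proof -
    have "q - a \<in> relI e1 e2 e3 \<longleftrightarrow> q \<in> relI e1 e2 e3" for q
      using relI_add[of "q - a" e1 e2 e3 a] relI_diff[of q e1 e2 e3 a] a by auto
    then show ?thesis unfolding pcoset_def by simp
  qed
  show ?thesis using assms
    by (cases x0) (simp add: cls_def Lzero_def pc zero_prod_def)
qed

theorem lemma6p4:
  fixes e1 e2 e3 :: complex and h s :: "ltriple set"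
  assumes "e1 \<noteq> e2" and "e1 \<noteq> e3" and "e2 \<noteq> e3"
    and "is_lie_subalgebra (relI e1 e2 e3) h"
    and "h \<subseteq> Ralg e1 e2 e3"
    and "finite_codim (relI e1 e2 e3) h (Ralg e1 e2 e3)"
    and "is_lie_ideal (relI e1 e2 e3) s h"
    and "is_solvable (relI e1 e2 e3) s"
  shows "s = {Lzero (relI e1 e2 e3)}"
proof -
  let ?I = "relI e1 e2 e3"
  let ?R = "Ralg e1 e2 e3"
  let ?ph = "phi ?I"
  have sub: "is_subspace ?I h" using assms(4) by (simp add: is_lie_subalgebra_def)
  obtain F where fF: "finite F" and RF: "?R = Lspan ?I (h \<union> F)"
    using assms(6) unfolding finite_codim_def by blast
  have inR: "Wf ?I A B k \<in> Lspan ?I (h \<union> F)" if "A \<in> ?R" "B \<in> ?R" for A B k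
  proof -
    have "Wf ?I A B k \<in> ?R" using Wf_in[of A ?I "Rgens e1 e2 e3" B k] that unfolding Ralg_def by simp
    then show ?thesis using RF by simp
  qed
  obtain z1 a1 where z1: "z1 \<in> h" "\<exists>k\<le>card F. a1 k \<noteq> 0"
    "\<forall>P. onC e1 e2 e3 P \<longrightarrow> ?ph P z1 = (\<Sum>k\<le>card F. sc (a1 k) (?ph P (Wf ?I (X1g e1 e2 e3) (X2g e1 e2 e3) k)))"
  proof -
    have w: "\<And>k. Wf ?I (X1g e1 e2 e3) (X2g e1 e2 e3) k \<in> Lspan ?I (h \<union> F)"
      by (rule inR[OF Xg_in(1) Xg_in(2)])
    from extract_h[where W="\<lambda>k. Wf ?I (X1g e1 e2 e3) (X2g e1 e2 e3) k", OF sub fF w] obtain z a where "z \<in> h" "\<exists>k\<le>card F. a k \<noteq> 0"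
      "\<forall>P. onC e1 e2 e3 P \<longrightarrow> ?ph P z = (\<Sum>k\<le>card F. sc (a k) (?ph P (Wf ?I (X1g e1 e2 e3) (X2g e1 e2 e3) k)))"
      by blast
    then show ?thesis by (rule that)
  qed
  obtain z2 a2 where z2: "z2 \<in> h" "\<exists>k\<le>card F. a2 k \<noteq> 0"
    "\<forall>P. onC e1 e2 e3 P \<longrightarrow> ?ph P z2 = (\<Sum>k\<le>card F. sc (a2 k) (?ph P (Wf ?I (X2g e1 e2 e3) (X3g e1 e2 e3) k)))"
  proof -
    have w: "\<And>k. Wf ?I (X2g e1 e2 e3) (X3g e1 e2 e3) k \<in> Lspan ?I (h \<union> F)"
      by (rule inR[OF Xg_in(2) Xg_in(3)])
    from extract_h[where W="\<lambda>k. Wf ?I (X2g e1 e2 e3) (X3g e1 e2 e3) k", OF sub fF w] obtain z a where "z \<in> h" "\<exists>k\<le>card F. a k \<noteq> 0"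
      "\<forall>P. onC e1 e2 e3 P \<longrightarrow> ?ph P z = (\<Sum>k\<le>card F. sc (a k) (?ph P (Wf ?I (X2g e1 e2 e3) (X3g e1 e2 e3) k)))"
      by blast
    then show ?thesis by (rule that)
  qed
  obtain z3 a3 where z3: "z3 \<in> h" "\<exists>k\<le>card F. a3 k \<noteq> 0"
    "\<forall>P. onC e1 e2 e3 P \<longrightarrow> ?ph P z3 = (\<Sum>k\<le>card F. sc (a3 k) (?ph P (Wf ?I (X3g e1 e2 e3) (X1g e1 e2 e3) k)))"
  proof -
    have w: "\<And>k. Wf ?I (X3g e1 e2 e3) (X1g e1 e2 e3) k \<in> Lspan ?I (h \<union> F)"
      by (rule inR[OF Xg_in(3) Xg_in(1)])
    from extract_h[where W="\<lambda>k. Wf ?I (X3g e1 e2 e3) (X1g e1 e2 e3) k", OF sub fF w] obtain z a where "z \<in> h" "\<exists>k\<le>card F. a k \<noteq> 0"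
      "\<forall>P. onC e1 e2 e3 P \<longrightarrow> ?ph P z = (\<Sum>k\<le>card F. sc (a k) (?ph P (Wf ?I (X3g e1 e2 e3) (X1g e1 e2 e3) k)))"
      by blast
    then show ?thesis by (rule that)
  qed
  define G1 where "G1 w = (\<Sum>k\<le>card F. a1 k * w^k)" for w :: complex
  define G2 where "G2 w = (\<Sum>k\<le>card F. a2 k * w^k)" for w :: complex
  define G3 where "G3 w = (\<Sum>k\<le>card F. a3 k * w^k)" for w :: complex
  have val1: "?ph P z1 = (fst P * G1 (fst (snd P)^2), 0, 0)" if on: "onC e1 e2 e3 P" for P
    unfolding z1(3)[rule_format, OF on] phi_W1[OF on] sum_sc_triple
    by (simp add: G1_def sum_distrib_left mult_ac)
  have val2: "?ph P z2 = (0, fst (snd P) * G2 (snd (snd P)^2), 0)" if on: "onC e1 e2 e3 P" for P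
    unfolding z2(3)[rule_format, OF on] phi_W2[OF on] sum_sc_triple
    by (simp add: G2_def sum_distrib_left mult_ac)
  have val3: "?ph P z3 = (0, 0, snd (snd P) * G3 (fst P^2))" if on: "onC e1 e2 e3 P" for P
    unfolding z3(3)[rule_format, OF on] phi_W3[OF on] sum_sc_triple
    by (simp add: G3_def sum_distrib_left mult_ac)
  have fR1: "finite {w. G1 w = 0}" unfolding G1_def using z1(2) polyfun_roots_finite by blast
  have fR2: "finite {w. G2 w = 0}" unfolding G2_def using z2(2) polyfun_roots_finite by blast
  have fR3: "finite {w. G3 w = 0}" unfolding G3_def using z3(2) polyfun_roots_finite by blast
  define Z where "Z = {e1, e2, e3} \<union> (\<lambda>w. w + e2) ` {w. G1 w = 0} \<union> (\<lambda>w. w + e3) ` {w. G2 w = 0}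
     \<union> (\<lambda>w. w + e1) ` {w. G3 w = 0}"
  have fZ: "finite Z" unfolding Z_def using fR1 fR2 fR3 by simp
  have full: "\<forall>v. \<exists>y\<in>h. ?ph P y = v" if on: "onC e1 e2 e3 P" and nZ: "fst P ^ 2 + e1 \<notin> Z" for P
  proof
    fix v :: pt
    obtain t1 t2 t3 where Pd: "P = (t1, t2, t3)" by (cases P) auto
    have l2: "t2^2 + e2 = t1^2 + e1" and l3: "t3^2 + e3 = t1^2 + e1" using on unfolding onC_def Pd by auto
    have nZ': "t1^2 + e1 \<notin> Z" using nZ Pd by simp
    have "t1 \<noteq> 0" using nZ' unfolding Z_def by auto
    moreover have "G1 (t2^2) \<noteq> 0"
    proof
      assume "G1 (t2^2) = 0"
      then have "t2^2 + e2 \<in> Z" unfolding Z_def by blast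
      then show False using nZ' l2 by simp
    qed
    ultimately have n1: "t1 * G1 (t2^2) \<noteq> 0" by simp
    have "t2 \<noteq> 0" using nZ' l2 unfolding Z_def by auto
    moreover have "G2 (t3^2) \<noteq> 0"
    proof
      assume "G2 (t3^2) = 0"
      then have "t3^2 + e3 \<in> Z" unfolding Z_def by blast
      then show False using nZ' l3 by simp
    qed
    ultimately have n2: "t2 * G2 (t3^2) \<noteq> 0" by simp
    have "t3 \<noteq> 0" using nZ' l3 unfolding Z_def by auto
    moreover have "G3 (t1^2) \<noteq> 0"
    proof
      assume "G3 (t1^2) = 0"
      then have "t1^2 + e1 \<in> Z" unfolding Z_def by blast
      then show False using nZ' by simp
    qed
    ultimately have n3: "t3 * G3 (t1^2) \<noteq> 0" by simp
    obtain v1 v2 v3 where vd: "v = (v1, v2, v3)" by (cases v) auto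
    let ?y = "Ladd ?I (Lscale ?I (v1 / (t1 * G1 (t2^2))) z1)
      (Ladd ?I (Lscale ?I (v2 / (t2 * G2 (t3^2))) z2) (Lscale ?I (v3 / (t3 * G3 (t1^2))) z3))"
    have "?y \<in> h" using z1(1) z2(1) z3(1) subspaceD[OF sub] by simp
    moreover have "?ph P ?y = v"
      unfolding phi_Ladd[OF on] phi_Lscale[OF on] val1[OF on] val2[OF on] val3[OF on]
      using n1 n2 n3 by (simp add: Pd vd)
    ultimately show "\<exists>y\<in>h. ?ph P y = v" by blast
  qed
  have ssub: "is_subspace ?I s" and sh: "s \<subseteq> h" and sid: "\<And>x y. x \<in> h \<Longrightarrow> y \<in> s \<Longrightarrow> Lbr ?I x y \<in> s"
    using assms(7) unfolding is_lie_ideal_def by auto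
  obtain kk where kk: "derived ?I s kk = {Lzero ?I}" using assms(8) unfolding is_solvable_def by blast
  show ?thesis
  proof (rule ccontr)
    assume ne: "s \<noteq> {Lzero ?I}"
    have "Lzero ?I \<in> s" using subspaceD(1)[OF ssub] .
    then obtain x where xs: "x \<in> s" and xnz: "x \<noteq> Lzero ?I" using ne by blast
    have "x \<in> Lcarrier ?I" using xs sh sub unfolding is_subspace_def by blast
    then obtain x0 where x0: "x = cls ?I x0" unfolding Lcarrier_def by blast
    have "\<exists>p. p \<notin> ?I \<and> (\<forall>P. onC e1 e2 e3 P \<longrightarrow> ev P p \<noteq> 0 \<longrightarrow> ?ph P x \<noteq> 0)"
    proof (cases "fst x0 \<in> ?I")
      case f1: True
      show ?thesis
      proof (cases "fst (snd x0) \<in> ?I")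
        case f2: True
        have "snd (snd x0) \<notin> ?I" using cls_zero[OF f1 f2] xnz x0 by blast
        then show ?thesis
          by (intro exI[of _ "snd (snd x0)"]) (auto simp: x0 phi_cls ev3_def zero_prod_def)
      next
        case False
        then show ?thesis
          by (intro exI[of _ "fst (snd x0)"]) (auto simp: x0 phi_cls ev3_def zero_prod_def)
      qed
    next
      case False
      then show ?thesis
        by (intro exI[of _ "fst x0"]) (auto simp: x0 phi_cls ev3_def zero_prod_def)
    qed
    then obtain p where p: "p \<notin> ?I" and pP: "\<And>P. onC e1 e2 e3 P \<Longrightarrow> ev P p \<noteq> 0 \<Longrightarrow> ?ph P x \<noteq> 0"
      by blast
    obtain P where on: "onC e1 e2 e3 P" and nZ: "fst P ^ 2 + e1 \<notin> Z" and evp: "ev P p \<noteq> 0"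
      using NS[OF p fZ] by blast
    have fullP: "\<forall>v. \<exists>y\<in>h. ?ph P y = v" using full[OF on nZ] .
    have allJ: "v \<in> ?ph P ` s" for v
    proof (rule simple_so3[of "?ph P ` s" "?ph P x"])
      fix u v assume "u \<in> ?ph P ` s" "v \<in> ?ph P ` s"
      then obtain a b where "a \<in> s" "b \<in> s" "u = ?ph P a" "v = ?ph P b" by blast
      then show "u + v \<in> ?ph P ` s"
        using subspaceD(2)[OF ssub] phi_Ladd[OF on] by (metis image_eqI)
    next
      fix c u assume "u \<in> ?ph P ` s"
      then obtain a where "a \<in> s" "u = ?ph P a" by blast
      then show "sc c u \<in> ?ph P ` s"
        using subspaceD(3)[OF ssub] phi_Lscale[OF on] by (metis image_eqI)
    next
      fix u v assume "v \<in> ?ph P ` s"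
      then obtain b where b: "b \<in> s" "v = ?ph P b" by blast
      obtain y where y: "y \<in> h" "?ph P y = u" using fullP by blast
      have "Lbr ?I y b \<in> s" using sid[OF y(1) b(1)] .
      moreover have "?ph P (Lbr ?I y b) = cr u v" using phi_Lbr[OF on] y b by simp
      ultimately show "cr u v \<in> ?ph P ` s" by (metis image_eqI)
    next
      show "?ph P x \<in> ?ph P ` s" using xs by blast
      show "?ph P x \<noteq> 0" using pP[OF on evp] .
    qed
    have "\<forall>v. \<exists>y\<in>s. ?ph P y = v"
    proof
      fix v show "\<exists>y\<in>s. ?ph P y = v" using allJ[of v] by blast
    qed
    then have "\<forall>v. \<exists>y\<in>derived ?I s kk. ?ph P y = v" by (rule derived_full[OF on])
    then obtain y where "y \<in> derived ?I s kk" "?ph P y = (1,0,0)" by blast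
    then have "?ph P (Lzero ?I) = (1,0,0)" using kk by simp
    then show False using phi_Lzero[OF on] by (simp add: zero_prod_def)
  qed
qed


end
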